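(* Let $A$ be a $3\times3$ skew-symmetric integer matrix whose associated quiver is connected, and let $g\in\mathbb{Z}^3$ be nonzero with $Ag=0$. The graded cluster algebra $\mathcal{A}((x_1,x_2,x_3),A,g)$ has infinitely many occurring degrees if and only if $A$ is mutation-infinite.
   Context: Matrix mutation: $\mu_k(B)=(b'_{ij})$ with $b'_{ij}=-b_{ij}$ if $i=k$ or $j=k$, $b'_{ij}=b_{ij}+\operatorname{sgn}(b_{ik})\max(b_{ik}b_{kj},0)$ otherwise; $B$ is mutation-infinite if infinitely many distinct matrices are obtained from it by finite sequences of mutations. The quiver of $B$ has $b_{ij}$ arrows $i\to j$ when $b_{ij}>0$. A seed $((x_1,x_2,x_3),B)$ mutates in direction $k$ to $(x',\mu_k B)$ with $x'_j=x_j$ ($j\ne k$), $x'_k=\big(\prod_{b_{ik}>0}x_i^{b_{ik}}+\prod_{b_{ik}<0}x_i^{-b_{ik}}\big)/x_k$. Cluster variables are all entries of reachable clusters; grading $\deg x_i=g_i$, and under mutation at $k$ the degree vector becomes $g'$ with $g'_j=g_j$ ($j\ne k$), $g'_k=-g_k+\sum_{b_{ik}>0}b_{ik}g_i$; cluster variables are homogeneous. A degree occurs if some cluster variable has it. *)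

theory Defs
  imports "HOL-Analysis.Analysis" "HOL-Library.Numeral_Type"
begin

type_synonym exmat = "int ^ 3 ^ 3"
type_synonym degvec = "int ^ 3"

definition mat_mut :: "3 \<Rightarrow> exmat \<Rightarrow> exmat" where
  "mat_mut k B = (\<chi> i j. if i = k \<or> j = k then - (B $ i $ j)
       else B $ i $ j + sgn (B $ i $ k) * max (B $ i $ k * B $ k $ j) 0)"

definition deg_mut :: "3 \<Rightarrow> exmat \<Rightarrow> degvec \<Rightarrow> degvec" where
  "deg_mut k B g = (\<chi> j. if j = k
       then - (g $ k) + (\<Sum>i\<in>{i. B $ i $ k > 0}. B $ i $ k * g $ i)
       else g $ j)"

definition skew_symmetric :: "exmat \<Rightarrow> bool" where
  "skew_symmetric B \<longleftrightarrow> (\<forall>i j. B $ i $ j = - (B $ j $ i))"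

definition quiver_connected :: "exmat \<Rightarrow> bool" where
  "quiver_connected B \<longleftrightarrow> (\<forall>i j. (i, j) \<in> {(a, b). B $ a $ b \<noteq> 0}\<^sup>*)"

inductive_set mut_class :: "exmat \<Rightarrow> exmat set" for A where
  base: "A \<in> mut_class A"
| step: "B \<in> mut_class A \<Longrightarrow> mat_mut k B \<in> mut_class A"

definition mutation_infinite :: "exmat \<Rightarrow> bool" where
  "mutation_infinite A \<longleftrightarrow> infinite (mut_class A)"

text \<open>Graded seeds (exchange matrix, degrees of the cluster variables) reachable from (A, g).\<close>
inductive_set graded_seeds :: "exmat \<Rightarrow> degvec \<Rightarrow> (exmat \<times> degvec) set" for A g where
  base: "(A, g) \<in> graded_seeds A g"
| step: "(B, d) \<in> graded_seeds A g \<Longrightarrow> (mat_mut k B, deg_mut k B d) \<in> graded_seeds A g"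

text \<open>Degrees occurring in the graded cluster algebra A((x1,x2,x3),A,g): degrees of
  all cluster variables, i.e. of all entries of reachable clusters.\<close>
definition occurring_degrees :: "exmat \<Rightarrow> degvec \<Rightarrow> int set" where
  "occurring_degrees A g = {d $ j | B d j. (B, d) \<in> graded_seeds A g}"

end

theory Submission
  imports Defs
begin

definition wv :: "exmat \<Rightarrow> degvec" where
  "wv B = (\<chi> j. if j = 1 then B$2$3 else if j = 2 then -(B$1$3) else B$1$2)"

lemma sum_set3: "(\<Sum>i\<in>{i::3. P i}. f i) = (if P 1 then f 1 else 0) + (if P 2 then f 2 else 0) + (if P 3 then f 3 else 0)"
proof -
  have "(\<Sum>i\<in>{i::3. P i}. f i) = (\<Sum>i\<in>UNIV. if P i then f i else 0)"
    by (simp add: sum.If_cases)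
  then show ?thesis by (simp add: sum_3)
qed

lemma skew_iff: "skew_symmetric B \<longleftrightarrow> B$1$1 = 0 \<and> B$2$2 = 0 \<and> B$3$3 = 0 \<and> B$2$1 = - B$1$2 \<and> B$3$1 = - B$1$3 \<and> B$3$2 = - B$2$3"
  unfolding skew_symmetric_def forall_3 by auto

lemma sgncases: "(x::int) < 0 \<or> x = 0 \<or> x > 0" by auto

lemma w_mut: assumes "skew_symmetric B" shows "deg_mut k B (wv B) = - wv (mat_mut k B)"
proof -
  have s: "B$1$1 = 0" "B$2$2 = 0" "B$3$3 = 0" "B$2$1 = - B$1$2" "B$3$1 = - B$1$3" "B$3$2 = - B$2$3"
    using assms unfolding skew_iff by auto
  show ?thesis
  using exhaust_3[of k] sgncases[of "B$1$2"] sgncases[of "B$1$3"] sgncases[of "B$2$3"]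
  apply (elim disjE)
  apply (simp_all add: s mat_mut_def deg_mut_def wv_def vec_eq_iff forall_3 sum_set3 sgn_if max_def
     mult_pos_neg mult_neg_pos mult_neg_neg mult_pos_pos)
  apply (auto simp: zero_le_mult_iff mult_less_0_iff mult_le_0_iff)
  done
qed

lemma skew_mut: assumes "skew_symmetric B" shows "skew_symmetric (mat_mut k B)"
proof -
  have s: "B$1$1 = 0" "B$2$2 = 0" "B$3$3 = 0" "B$2$1 = - B$1$2" "B$3$1 = - B$1$3" "B$3$2 = - B$2$3"
    using assms unfolding skew_iff by auto
  show ?thesis
  using exhaust_3[of k] sgncases[of "B$1$2"] sgncases[of "B$1$3"] sgncases[of "B$2$3"]
  apply (elim disjE)
  apply (simp_all add: s skew_iff mat_mut_def sgn_if max_def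
     mult_pos_neg mult_neg_pos mult_neg_neg mult_pos_pos)
  apply (auto simp: zero_le_mult_iff mult_less_0_iff mult_le_0_iff algebra_simps)
  done
qed

lemma deg_lin: "deg_mut k B (\<chi> i. c * d$i) $ j = c * deg_mut k B d $ j"
  unfolding deg_mut_def by (simp add: sum_distrib_left algebra_simps)

lemma seeds_mat: "(B,d) \<in> graded_seeds A g \<Longrightarrow> B \<in> mut_class A"
  by (induction rule: graded_seeds.induct) (auto intro: mut_class.intros)

lemma mat_seeds: "B \<in> mut_class A \<Longrightarrow> \<exists>d. (B,d) \<in> graded_seeds A g"
  by (induction rule: mut_class.induct) (auto intro: graded_seeds.intros)

lemma seeds_inv:
  assumes "(B,d) \<in> graded_seeds A g" "skew_symmetric A" "\<forall>j. n*g$j = m*wv A$j"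
  shows "skew_symmetric B \<and> (\<exists>s::int. (s=1 \<or> s=-1) \<and> (\<forall>j. n*d$j = s*m*wv B$j))"
  using assms(1)
proof (induction rule: graded_seeds.induct)
  case base
  then show ?case using assms by (intro conjI exI[of _ 1]) auto
next
  case (step B d k)
  then obtain s::int where s: "s=1 \<or> s=-1" "\<forall>j. n*d$j = s*m*wv B$j" and sk: "skew_symmetric B" by blast
  have eq: "(\<chi> i. n * d$i) = (\<chi> i. (s*m) * wv B$i)" using s(2) by (simp add: vec_eq_iff)
  have "\<forall>j. n * deg_mut k B d $ j = (-s)*m*wv (mat_mut k B) $ j"
  proof
    fix j
    have "n * deg_mut k B d $ j = deg_mut k B (\<chi> i. n * d$i) $ j" by (simp add: deg_lin)
    also have "\<dots> = deg_mut k B (\<chi> i. (s*m) * wv B$i) $ j" by (simp only: eq)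
    also have "\<dots> = (s*m) * deg_mut k B (wv B) $ j" by (simp only: deg_lin)
    also have "\<dots> = (-s)*m*wv (mat_mut k B) $ j" using w_mut[OF sk] by simp
    finally show "n * deg_mut k B d $ j = (-s)*m*wv (mat_mut k B) $ j" .
  qed
  moreover have "-s = 1 \<or> -s = -1" using s(1) by auto
  ultimately show ?case using skew_mut[OF sk] by blast
qed

lemma init:
  assumes "skew_symmetric A" "quiver_connected A" "g \<noteq> 0" "A *v g = 0"
  shows "\<exists>n m::int. n \<noteq> 0 \<and> m \<noteq> 0 \<and> (\<forall>j. n*g$j = m*wv A$j)"
proof -
  have nz: "A$1$2 \<noteq> 0 \<or> A$1$3 \<noteq> 0 \<or> A$2$3 \<noteq> 0"
  proof (rule ccontr)
    assume "\<not> ?thesis"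
    then have z: "\<forall>a b. A $ a $ b = 0" using assms(1) unfolding skew_iff forall_3
      by simp
    then have "{(a, b). A $ a $ b \<noteq> 0} = {}" by simp
    moreover have "(1::3, 2) \<in> {(a, b). A $ a $ b \<noteq> 0}\<^sup>*" using assms(2) unfolding quiver_connected_def by blast
    ultimately show False by simp
  qed
  have e: "A$1$2 * g$2 + A$1$3 * g$3 = 0" "- A$1$2 * g$1 + A$2$3 * g$3 = 0" "- A$1$3 * g$1 - A$2$3 * g$2 = 0"
    using assms(4) assms(1) unfolding skew_iff matrix_vector_mult_def vec_eq_iff forall_3 sum_3
    by auto
  have gnz: "g$1 \<noteq> 0 \<or> g$2 \<noteq> 0 \<or> g$3 \<noteq> 0" using assms(3) by (auto simp: vec_eq_iff forall_3)
  show ?thesis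
  proof (cases "A$1$2 \<noteq> 0")
    case True
    have "g$3 \<noteq> 0" using e gnz True by auto
    then show ?thesis using True e
      by (intro exI[of _ "A$1$2"] exI[of _ "g$3"]) (auto simp: wv_def forall_3 algebra_simps)
  next
    case F: False
    show ?thesis
    proof (cases "A$1$3 \<noteq> 0")
      case True
      have "g$2 \<noteq> 0" using e gnz True F by auto
      then show ?thesis using True e
        by (intro exI[of _ "- A$1$3"] exI[of _ "g$2"]) (auto simp: wv_def forall_3 algebra_simps)
    next
      case False
      then have T: "A$2$3 \<noteq> 0" using nz F by auto
      have "g$1 \<noteq> 0" using e gnz T F False by auto
      then show ?thesis using T e
        by (intro exI[of _ "A$2$3"] exI[of _ "g$1"]) (auto simp: wv_def forall_3 algebra_simps)
    qed
  qed
qed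


lemma fin_sol: "(n::int) \<noteq> 0 \<Longrightarrow> finite {x. n*x = c \<or> n*x = c'}"
proof -
  assume n: "n \<noteq> 0"
  have "{x. n*x = c \<or> n*x = c'} \<subseteq> {c div n, c' div n}" using n by auto
  then show ?thesis by (rule finite_subset) simp
qed

lemma fin_bound: "finite (S::int set) \<Longrightarrow> \<exists>K. \<forall>x\<in>S. \<bar>x\<bar> \<le> K"
  by (intro exI[of _ "\<Sum>x\<in>S. \<bar>x\<bar>"]) (auto intro: member_le_sum)

theorem mainTheorem11:
  fixes A :: "int ^ 3 ^ 3" and g :: "int ^ 3"
  assumes "skew_symmetric A"
    and "quiver_connected A"
    and "g \<noteq> 0"
    and "A *v g = 0"
  shows "infinite (occurring_degrees A g) \<longleftrightarrow> mutation_infinite A"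
proof -
  obtain n m :: int where nm: "n \<noteq> 0" "m \<noteq> 0" "\<forall>j. n*g$j = m*wv A$j"
    using init[OF assms] by blast
  note inv = seeds_inv[OF _ assms(1) nm(3)]
  have "finite (occurring_degrees A g) \<longleftrightarrow> finite (mut_class A)"
  proof
    assume fD: "finite (occurring_degrees A g)"
    then obtain K where K: "\<forall>x\<in>occurring_degrees A g. \<bar>x\<bar> \<le> K" using fin_bound by blast
    define L where "L = \<bar>n\<bar> * K"
    define h where "h = (\<lambda>B::exmat. (B$1$2, B$1$3, B$2$3))"
    have bnd: "skew_symmetric B \<and> (\<forall>j. \<bar>wv B $ j\<bar> \<le> L)" if B: "B \<in> mut_class A" for B
    proof -
      obtain d where d: "(B,d) \<in> graded_seeds A g" using mat_seeds[OF B] by blast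
      obtain s::int where s: "s=1 \<or> s=-1" "\<forall>j. n*d$j = s*m*wv B$j" and sk: "skew_symmetric B"
        using inv[OF d] by blast
      have "\<bar>wv B $ j\<bar> \<le> L" for j
      proof -
        have dj: "\<bar>d$j\<bar> \<le> K" using K d unfolding occurring_degrees_def by blast
        have e1: "\<bar>n*d$j\<bar> = \<bar>s*m*wv B$j\<bar>" using s(2) by simp
        have "\<bar>s\<bar> = 1" using s(1) by auto
        then have "\<bar>m\<bar> * \<bar>wv B $ j\<bar> = \<bar>n\<bar> * \<bar>d$j\<bar>"
          using e1 by (simp add: abs_mult)
        also have "\<dots> \<le> \<bar>n\<bar> * K" using dj by (simp add: mult_left_mono)
        finally have "\<bar>m\<bar> * \<bar>wv B $ j\<bar> \<le> L" unfolding L_def .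
        moreover have "\<bar>wv B $ j\<bar> \<le> \<bar>m\<bar> * \<bar>wv B $ j\<bar>"
        proof -
          have "1 \<le> \<bar>m\<bar>" using nm(2) by linarith
          then show ?thesis using mult_right_mono[of 1 "\<bar>m\<bar>" "\<bar>wv B $ j\<bar>"] by simp
        qed
        ultimately show ?thesis by linarith
      qed
      then show ?thesis using sk by blast
    qed
    have "h ` mut_class A \<subseteq> {-L..L} \<times> {-L..L} \<times> {-L..L}"
    proof
      fix x assume "x \<in> h ` mut_class A"
      then obtain B where B: "B \<in> mut_class A" "x = h B" by blast
      have "\<bar>wv B $ 1\<bar> \<le> L" "\<bar>wv B $ 2\<bar> \<le> L" "\<bar>wv B $ 3\<bar> \<le> L" using bnd[OF B(1)] by auto
      then show "x \<in> {-L..L} \<times> {-L..L} \<times> {-L..L}" using B(2)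
        by (auto simp: h_def wv_def abs_le_iff)
    qed
    then have "finite (h ` mut_class A)" by (rule finite_subset) simp
    moreover have "inj_on h (mut_class A)"
    proof (rule inj_onI)
      fix B C assume B: "B \<in> mut_class A" and C: "C \<in> mut_class A" and e: "h B = h C"
      have sB: "skew_symmetric B" and sC: "skew_symmetric C" using bnd B C by auto
      show "B = C" using sB sC e unfolding skew_iff h_def vec_eq_iff forall_3 by auto
    qed
    ultimately show "finite (mut_class A)" using finite_imageD by blast
  next
    assume fM: "finite (mut_class A)"
    have "occurring_degrees A g \<subseteq> (\<Union>B\<in>mut_class A. \<Union>j. {x. n*x = m*wv B$j \<or> n*x = -(m*wv B$j)})"
    proof
      fix x assume "x \<in> occurring_degrees A g"
      then obtain B d j where x: "x = d$j" and d: "(B,d) \<in> graded_seeds A g"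
        unfolding occurring_degrees_def by blast
      obtain s::int where s: "s=1 \<or> s=-1" "\<forall>j. n*d$j = s*m*wv B$j"
        using inv[OF d] by blast
      have "n*x = m*wv B$j \<or> n*x = -(m*wv B$j)" using s x by auto
      then show "x \<in> (\<Union>B\<in>mut_class A. \<Union>j. {x. n*x = m*wv B$j \<or> n*x = -(m*wv B$j)})"
        using seeds_mat[OF d] by blast
    qed
    moreover have "finite (\<Union>B\<in>mut_class A. \<Union>j. {x. n*x = m*wv B$j \<or> n*x = -(m*wv B$j)})"
      using fM fin_sol[OF nm(1)] by auto
    ultimately show "finite (occurring_degrees A g)" using finite_subset by blast
  qed
  then show ?thesis unfolding mutation_infinite_def by blast
qed

end
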